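(* Let $\eta=\frac1{20}$ and let $a,b>0$ with $a\in[30,\tfrac43b]$. Then $$\big(1-\eta-\eta\,\mathbb E_{x\sim\mathcal N(b,1)}[\tanh'(ax)]\big)a+\eta\,\mathbb E_{x\sim\mathcal N(b,1)}\Big[-\tfrac12\tanh''(ax)a^2(x-b)+\tanh'(ax)(x^2-bx)+\tanh(ax)(x-b)\Big]>0.$$ *)

theory Defs
  imports "HOL-Probability.Probability"
begin

definition eta :: real where "eta = 1/20"

definition tanh' :: "real \<Rightarrow> real" where "tanh' = deriv (tanh :: real \<Rightarrow> real)"

definition tanh'' :: "real \<Rightarrow> real" where "tanh'' = deriv tanh'"

definition gauss :: "real \<Rightarrow> real measure" where
  "gauss mu = density lborel (normal_density mu 1)"

end

theory Submission
  imports Defs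
begin

lemma tanh'_eq: "tanh' = (\<lambda>y. 1 - tanh y ^ 2)"
proof
  fix y :: real
  have "(tanh has_field_derivative (1 - tanh y ^ 2)) (at y)"
    by (auto intro!: derivative_eq_intros)
  then show "tanh' y = 1 - tanh y ^ 2"
    unfolding tanh'_def by (rule DERIV_imp_deriv)
qed

lemma tanh''_eq: "tanh'' y = - 2 * tanh y * (1 - tanh y ^ 2)"
proof -
  have "((\<lambda>y. 1 - tanh y ^ 2) has_field_derivative (- 2 * tanh y * (1 - tanh y ^ 2))) (at y)"
    by (auto intro!: derivative_eq_intros simp: algebra_simps power2_eq_square)
  then show ?thesis
    unfolding tanh''_def tanh'_eq by (rule DERIV_imp_deriv)
qed

lemma sech_bounds:
  fixes y :: real
  shows "0 \<le> 1 - tanh y ^ 2" "1 - tanh y ^ 2 \<le> 1" "(1 - tanh y ^ 2) * (1 + y^2) \<le> 1"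
proof -
  have c: "cosh y > 0" by simp
  have e0: "1 - tanh y ^ 2 = (cosh y ^ 2 - sinh y ^ 2) / cosh y ^ 2"
    using c by (simp add: tanh_def field_simps)
  have e: "1 - tanh y ^ 2 = 1 / cosh y ^ 2"
    unfolding e0 hyperbolic_pythagoras ..
  have sy: "\<bar>y\<bar> \<le> \<bar>sinh y\<bar>"
    using real_le_abs_sinh[of y] by (simp add: sinh_def exp_minus)
  have "y^2 \<le> sinh y ^ 2"
    using sy by (metis abs_ge_zero power2_abs power_mono)
  hence "1 + y^2 \<le> cosh y ^ 2" by (simp add: cosh_square_eq)
  thus "(1 - tanh y ^ 2) * (1 + y^2) \<le> 1"
    using c by (simp add: e field_simps)
  show "0 \<le> 1 - tanh y ^ 2" using e by simp
  show "1 - tanh y ^ 2 \<le> 1" by simp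
qed

lemma abs_le_sq: "\<bar>u::real\<bar> \<le> 1 + u^2"
proof (cases "\<bar>u\<bar> \<le> 1")
  case True then show ?thesis using zero_le_power2[of u] by linarith
next
  case False
  hence "\<bar>u\<bar> \<le> \<bar>u\<bar> * \<bar>u\<bar>" using mult_left_mono[of 1 "\<bar>u\<bar>" "\<bar>u\<bar>"] by simp
  also have "\<dots> = u^2" by (simp add: power2_eq_square)
  finally show ?thesis by simp
qed

lemma pointwise:
  fixes a b x s t :: real
  assumes a: "30 \<le> a" "a \<le> 4/3 * b"
    and s: "0 \<le> s" "s \<le> 1" "s * (1 + (a*x)^2) \<le> 1" and t: "\<bar>t\<bar> \<le> 1"
  shows "- (a^2 * t * s * (x - b) + s * x * (x - b) + t * (x - b))
         \<le> (3*a + 2) * (1 + (x - b)^2)"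
proof -
  have bpos: "b \<ge> 22" using a by simp
  let ?F = "1 + (x-b)^2"
  have F1: "\<bar>x - b\<bar> \<le> ?F" by (rule abs_le_sq)
  have T3: "\<bar>t * (x - b)\<bar> \<le> ?F"
  proof -
    have "\<bar>t * (x - b)\<bar> = \<bar>t\<bar> * \<bar>x - b\<bar>" by (simp add: abs_mult)
    also have "\<dots> \<le> \<bar>x - b\<bar>" using t by (simp add: mult_left_le_one_le)
    finally show ?thesis using F1 by linarith
  qed
  have sax: "s * (a*x)^2 \<le> 1"
  proof -
    have "s * (a*x)^2 = s * (1 + (a*x)^2) - s" by (simp add: algebra_simps)
    thus ?thesis using s by linarith
  qed
  have sx: "s * \<bar>x\<bar> \<le> 1"
  proof (cases "\<bar>x\<bar> \<le> 1")
    case True thus ?thesis using s by (simp add: mult_le_one)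
  next
    case False
    have "\<bar>x\<bar> \<le> \<bar>x\<bar> * \<bar>x\<bar>" using False mult_left_mono[of 1 "\<bar>x\<bar>" "\<bar>x\<bar>"] by simp
    also have "\<dots> = x^2" by (simp add: power2_eq_square)
    also have "x^2 \<le> a^2 * x^2"
    proof -
      have "1 * 1 \<le> a * a" using a by (intro mult_mono) auto
      hence "1 \<le> a^2" by (simp add: power2_eq_square)
      thus ?thesis using mult_right_mono[of 1 "a^2" "x^2"] by simp
    qed
    also have "\<dots> = (a*x)^2" by (simp add: power_mult_distrib)
    finally have "s * \<bar>x\<bar> \<le> s * (a*x)^2" using s by (simp add: mult_left_mono)
    thus ?thesis using sax by linarith
  qed
  have T2: "\<bar>s * x * (x - b)\<bar> \<le> ?F"
  proof -
    have "\<bar>s * x * (x - b)\<bar> = (s * \<bar>x\<bar>) * \<bar>x - b\<bar>" using s by (simp add: abs_mult)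
    also have "\<dots> \<le> \<bar>x - b\<bar>" using sx s by (simp add: mult_left_le_one_le)
    finally show ?thesis using F1 by linarith
  qed
  have key: "a * s * \<bar>x - b\<bar> \<le> 3 * ?F"
  proof (cases "\<bar>x\<bar> \<ge> 1")
    case True
    have "\<bar>x\<bar> * \<bar>x\<bar> \<ge> 1 * 1" using True by (intro mult_mono) auto
    hence x1: "x^2 \<ge> 1" by (simp add: power2_eq_square)
    have "a \<le> a^2" using a by (simp add: power2_eq_square)
    also have "a^2 \<le> a^2 * x^2" using x1 by (simp add: mult_le_cancel_left1)
    also have "\<dots> = (a*x)^2" by (simp add: power_mult_distrib)
    finally have "s * a \<le> s * (a*x)^2" using s by (simp add: mult_left_mono)
    hence "a * s \<le> 1" using sax by (simp add: mult.commute)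
    hence "a * s * \<bar>x - b\<bar> \<le> \<bar>x - b\<bar>" using s a by (simp add: mult_left_le_one_le)
    also have "\<dots> \<le> ?F" by (rule F1)
    also have "?F \<le> 3 * ?F" by (simp add: add_nonneg_nonneg)
    finally show ?thesis .
  next
    case False
    hence xb: "\<bar>x - b\<bar> \<ge> b/2" using bpos by auto
    have "a * s \<le> a" using s a by (simp add: mult_left_le_one_le)
    also have "\<dots> \<le> 3 * \<bar>x - b\<bar>" using xb a by simp
    finally have "a * s * \<bar>x - b\<bar> \<le> 3 * \<bar>x - b\<bar> * \<bar>x - b\<bar>" by (simp add: mult_right_mono)
    also have "\<dots> = 3 * (x-b)^2" by (simp add: power2_eq_square)
    finally show ?thesis by simp
  qed
  have T1: "\<bar>a^2 * t * s * (x - b)\<bar> \<le> a * (3 * ?F)"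
  proof -
    have "\<bar>a^2 * t * s * (x - b)\<bar> = a * \<bar>t\<bar> * (a * s * \<bar>x - b\<bar>)"
      using a s by (simp add: abs_mult power2_eq_square)
    also have "\<dots> \<le> a * (a * s * \<bar>x - b\<bar>)"
      using t a s by (intro mult_right_mono) (auto simp: mult_left_le_one_le)
    also have "\<dots> \<le> a * (3 * ?F)" using key a by simp
    finally show ?thesis .
  qed
  have "- (a^2 * t * s * (x - b) + s * x * (x - b) + t * (x - b))
     \<le> \<bar>a^2 * t * s * (x - b)\<bar> + \<bar>s * x * (x - b)\<bar> + \<bar>t * (x - b)\<bar>" by linarith
  also have "\<dots> \<le> a * (3 * ?F) + ?F + ?F" using T1 T2 T3 by linarith
  also have "\<dots> = (3*a + 2) * ?F" by (simp add: algebra_simps)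
  finally show ?thesis .
qed

lemma gauss_F:
  fixes b :: real
  shows "integrable (gauss b) (\<lambda>x. 1 + (x - b)^2)"
    "(\<integral>x. 1 + (x - b)^2 \<partial>gauss b) = 2"
proof -
  have i1: "integrable lborel (\<lambda>x. normal_density b 1 x * (x - b)^2)"
    using integrable_normal_moment[where \<sigma>=1 and \<mu>=b and k=2] by simp
  have i0: "integrable lborel (\<lambda>x. normal_density b 1 x)" by simp
  have iF: "integrable lborel (\<lambda>x. normal_density b 1 x * (1 + (x - b)^2))"
    using Bochner_Integration.integrable_add[OF i0 i1] by (simp add: algebra_simps)
  show "integrable (gauss b) (\<lambda>x. 1 + (x - b)^2)"
    unfolding gauss_def using iF
    by (subst integrable_density) auto
  have m1: "(\<integral>x. normal_density b 1 x * (x - b)^2 \<partial>lborel) = 1"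
    using integral_normal_moment_even[where \<sigma>=1 and \<mu>=b and k=1] by simp
  have "(\<integral>x. 1 + (x - b)^2 \<partial>gauss b) = (\<integral>x. normal_density b 1 x * (1 + (x - b)^2) \<partial>lborel)"
    unfolding gauss_def by (subst integral_density) auto
  also have "\<dots> = (\<integral>x. normal_density b 1 x + normal_density b 1 x * (x - b)^2 \<partial>lborel)"
    by (simp add: algebra_simps)
  also have "\<dots> = 2" using Bochner_Integration.integral_add[OF i0 i1] m1 by simp
  finally show "(\<integral>x. 1 + (x - b)^2 \<partial>gauss b) = 2" .
qed

lemma gauss_prob: "prob_space (gauss b)"
  unfolding gauss_def by (rule prob_space_normal_density) simp

theorem lemmaF3:
  fixes a b :: real
  assumes "a > 0" and "b > 0" and "30 \<le> a" and "a \<le> 4/3 * b"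
  shows "(1 - eta - eta * (\<integral>x. tanh' (a * x) \<partial>gauss b)) * a
         + eta * (\<integral>x. (- (1/2) * tanh'' (a * x) * a^2 * (x - b)
                          + tanh' (a * x) * (x^2 - b * x)
                          + tanh (a * x) * (x - b)) \<partial>gauss b) > 0"
proof -
  interpret P: prob_space "gauss b" by (rule gauss_prob)
  define h where "h = (\<lambda>x. (- (1/2) * tanh'' (a * x) * a^2 * (x - b)
                          + tanh' (a * x) * (x^2 - b * x)
                          + tanh (a * x) * (x - b)))"
  have E1: "(\<integral>x. tanh' (a * x) \<partial>gauss b) \<le> 1"
  proof -
    have "(\<integral>x. tanh' (a * x) \<partial>gauss b) \<le> (\<integral>x. 1 \<partial>gauss b)"
      by (rule integral_mono') (auto simp: tanh'_eq sech_bounds)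
    thus ?thesis using P.prob_space by simp
  qed
  have hp: "- h x \<le> (3*a + 2) * (1 + (x - b)^2)" for x
  proof -
    have "h x = a^2 * tanh (a*x) * (1 - tanh (a*x) ^ 2) * (x - b)
             + (1 - tanh (a*x) ^ 2) * x * (x - b) + tanh (a*x) * (x - b)"
      unfolding h_def tanh'_eq tanh''_eq by (simp add: algebra_simps power2_eq_square)
    moreover have "- (a^2 * tanh (a*x) * (1 - tanh (a*x) ^ 2) * (x - b)
             + (1 - tanh (a*x) ^ 2) * x * (x - b) + tanh (a*x) * (x - b))
          \<le> (3*a + 2) * (1 + (x - b)^2)"
      using pointwise[OF assms(3,4) sech_bounds(1,2,3)[of "a*x"], where t="tanh (a*x)"]
        tanh_real_bounds[of "a*x"] by (simp add: abs_le_iff)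
    ultimately show ?thesis by simp
  qed
  have E2: "(\<integral>x. - h x \<partial>gauss b) \<le> (3*a+2) * 2"
  proof -
    have "(\<integral>x. - h x \<partial>gauss b) \<le> (\<integral>x. (3*a + 2) * (1 + (x - b)^2) \<partial>gauss b)"
      by (rule integral_mono') (use gauss_F(1) hp assms in auto)
    also have "\<dots> = (3*a+2) * 2" using gauss_F(2) by simp
    finally show ?thesis .
  qed
  hence E2': "(\<integral>x. h x \<partial>gauss b) \<ge> - ((3*a+2) * 2)" by simp
  have A: "(1 - eta - eta * (\<integral>x. tanh' (a * x) \<partial>gauss b)) * a \<ge> (1 - 2 * eta) * a"
    using E1 assms by (intro mult_right_mono) (auto simp: eta_def)
  have B: "eta * (\<integral>x. h x \<partial>gauss b) \<ge> eta * (- ((3*a+2) * 2))"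
    using E2' by (intro mult_left_mono) (auto simp: eta_def)
  have C: "(1 - 2 * eta) * a + eta * (- ((3*a+2) * 2)) > 0"
    using assms by (simp add: eta_def field_simps)
  have "(1 - eta - eta * (\<integral>x. tanh' (a * x) \<partial>gauss b)) * a + eta * (\<integral>x. h x \<partial>gauss b) > 0"
    using A B C by linarith
  thus ?thesis unfolding h_def .
qed

end
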